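(* Let $(M,\nabla_0)$ be a flat hom-connection with respect to a differential graded algebra $\Omega A$, with extensions $\nabla_n:\mathrm{Hom}_A(\Omega^{n+1}A,M)\to\mathrm{Hom}_A(\Omega^nA,M)$, $\nabla_n(f)(\omega)=\nabla_0(f\omega)+(-1)^{n+1}f(d\omega)$. Then: (a) $\nabla_{n-1}\circ\nabla_n=0$ for all $n\ge1$, so $\cdots\xrightarrow{\nabla_2}\mathrm{Hom}_A(\Omega^2A,M)\xrightarrow{\nabla_1}\mathrm{Hom}_A(\Omega^1A,M)\xrightarrow{\nabla_0}M$ is a chain complex; denote its homology by $H_*(A;M,\nabla_* )$ (with $\mathrm{Hom}_A(\Omega^kA,M)$ in degree $k$). (b) The right action of $\Omega A$ on $\bigoplus_{n\ge0}\mathrm{Hom}_A(\Omega^nA,M)$, $(f\omega)(\omega')=f(\omega\omega')$, descends to a right action of the cohomology $H^*(A)$ of $(\Omega A,d)$ on $H_*(A;M,\nabla_* )$, given by $[f]\cdot[\omega]=[f\omega]$.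
   Context: All algebras are associative and unital over a field $k$. $\Omega A=\bigoplus_{n\ge0}\Omega^nA$, $\Omega^0A=A$, is a differential graded algebra with degree-one differential $d$, $d^2=0$, satisfying the graded Leibniz rule. $M$ is a right $A$-module; $\mathrm{Hom}_A$ denotes right $A$-linear maps; $\mathrm{Hom}_A(\Omega^1A,M)$ is a right $A$-module via $(fa)(\omega)=f(a\omega)$; $\mathrm{Hom}_A(A,M)\cong M$. For $\omega\in\Omega^nA$ and $f\in\mathrm{Hom}_A(\Omega^{n+m}A,M)$, $f\omega\in\mathrm{Hom}_A(\Omega^mA,M)$ is $(f\omega)(\omega')=f(\omega\omega')$. A hom-connection is a $k$-linear map $\nabla_0:\mathrm{Hom}_A(\Omega^1A,M)\to M$ with $\nabla_0(fa)=\nabla_0(f)a+f(da)$ for all $f$ and $a\in A$. Its curvature is $F=\nabla_0\circ\nabla_1:\mathrm{Hom}_A(\Omega^2A,M)\to M$, and the hom-connection is called flat if $F=0$. *)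

theory Defs
  imports Main
begin

text \<open>
The total DGA \<Omega>A is a ring of type 'w (a k-algebra via a central unital ring
homomorphism iota from the field 'k); its homogeneous pieces are the subsets Om n, with
Om 0 = A. The right A-module M is a type 'm with right action act (only its values on
elements of Om 0 matter). Elements of Hom_A(\<Omega>^n A, M) are represented as functions
'w => 'm that are additive and right A-linear on Om n and vanish outside Om n.
\<close>

definition graded_dga ::
  "('k::field \<Rightarrow> 'w::ring_1) \<Rightarrow> (nat \<Rightarrow> 'w set) \<Rightarrow> ('w \<Rightarrow> 'w) \<Rightarrow> bool" where
  "graded_dga iota Om d \<longleftrightarrow>
     \<comment> \<open>k-algebra structure: iota is a unital ring homomorphism into the centre\<close>
     iota 1 = 1 \<and> (\<forall>a b. iota (a + b) = iota a + iota b) \<and> (\<forall>a b. iota (a * b) = iota a * iota b)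
   \<and> (\<forall>c x. iota c * x = x * iota c)
     \<comment> \<open>each Om n is a k-subspace\<close>
   \<and> (\<forall>n. 0 \<in> Om n \<and> (\<forall>x\<in>Om n. \<forall>y\<in>Om n. x + y \<in> Om n)
          \<and> (\<forall>c. \<forall>x\<in>Om n. iota c * x \<in> Om n))
     \<comment> \<open>grading of the algebra\<close>
   \<and> 1 \<in> Om 0
   \<and> (\<forall>n m. \<forall>x\<in>Om n. \<forall>y\<in>Om m. x * y \<in> Om (n + m))
     \<comment> \<open>\<Omega>A is the direct sum of the Om n\<close>
   \<and> (\<forall>x. \<exists>!c. (\<forall>n. c n \<in> Om n) \<and> finite {n. c n \<noteq> 0} \<and> x = sum c {n. c n \<noteq> 0})
     \<comment> \<open>the differential: k-linear, of degree one, square zero, graded Leibniz rule\<close>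
   \<and> (\<forall>x y. d (x + y) = d x + d y) \<and> (\<forall>c x. d (iota c * x) = iota c * d x)
   \<and> (\<forall>n. \<forall>x\<in>Om n. d x \<in> Om (Suc n))
   \<and> (\<forall>x. d (d x) = 0)
   \<and> (\<forall>n m. \<forall>x\<in>Om n. \<forall>y\<in>Om m. d (x * y) = d x * y + (-1) ^ n * x * d y)"

definition right_module ::
  "(nat \<Rightarrow> 'w::ring_1 set) \<Rightarrow> ('m::ab_group_add \<Rightarrow> 'w \<Rightarrow> 'm) \<Rightarrow> bool" where
  "right_module Om act \<longleftrightarrow>
     (\<forall>m. act m 1 = m)
   \<and> (\<forall>m. \<forall>a\<in>Om 0. \<forall>b\<in>Om 0. act (act m a) b = act m (a * b))
   \<and> (\<forall>m m'. \<forall>a\<in>Om 0. act (m + m') a = act m a + act m' a)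
   \<and> (\<forall>m. \<forall>a\<in>Om 0. \<forall>b\<in>Om 0. act m (a + b) = act m a + act m b)"

text \<open>Hom_A(\<Omega>^n A, M), right A-linear maps (k-linearity follows, since k acts through A).\<close>
definition HomA ::
  "(nat \<Rightarrow> 'w::ring_1 set) \<Rightarrow> ('m::ab_group_add \<Rightarrow> 'w \<Rightarrow> 'm) \<Rightarrow> nat \<Rightarrow> ('w \<Rightarrow> 'm) set" where
  "HomA Om act n = {f.
      (\<forall>x\<in>Om n. \<forall>y\<in>Om n. f (x + y) = f x + f y)
    \<and> (\<forall>x\<in>Om n. \<forall>a\<in>Om 0. f (x * a) = act (f x) a)
    \<and> (\<forall>x. x \<notin> Om n \<longrightarrow> f x = 0)}"

text \<open>For f in Hom_A(\<Omega>^(k+deg w) A, M), homact Om k f w is f w in Hom_A(\<Omega>^k A, M):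
  (f w)(w') = f (w w').\<close>
definition homact ::
  "(nat \<Rightarrow> 'w::ring_1 set) \<Rightarrow> nat \<Rightarrow> ('w \<Rightarrow> 'm::ab_group_add) \<Rightarrow> 'w \<Rightarrow> ('w \<Rightarrow> 'm)" where
  "homact Om k f w = (\<lambda>w'. if w' \<in> Om k then f (w * w') else 0)"

definition signm :: "nat \<Rightarrow> 'm::ab_group_add \<Rightarrow> 'm" where
  "signm k x = (if even k then x else - x)"

definition hom_connection ::
  "('k::field \<Rightarrow> 'w::ring_1) \<Rightarrow> (nat \<Rightarrow> 'w set) \<Rightarrow> ('w \<Rightarrow> 'w) \<Rightarrow>
   ('m::ab_group_add \<Rightarrow> 'w \<Rightarrow> 'm) \<Rightarrow> (('w \<Rightarrow> 'm) \<Rightarrow> 'm) \<Rightarrow> bool" where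
  "hom_connection iota Om d act nabla0 \<longleftrightarrow>
     (\<forall>f\<in>HomA Om act 1. \<forall>g\<in>HomA Om act 1. nabla0 (\<lambda>x. f x + g x) = nabla0 f + nabla0 g)
   \<and> (\<forall>f\<in>HomA Om act 1. \<forall>c. nabla0 (\<lambda>x. act (f x) (iota c)) = act (nabla0 f) (iota c))
   \<and> (\<forall>f\<in>HomA Om act 1. \<forall>a\<in>Om 0.
        nabla0 (homact Om 1 f a) = act (nabla0 f) a + f (d a))"

text \<open>For n = 0 this is nabla_0 composed
  with the identification M = Hom_A(A, M), m \<mapsto> (a \<mapsto> m a).\<close>
definition nablaE ::
  "(nat \<Rightarrow> 'w::ring_1 set) \<Rightarrow> ('w \<Rightarrow> 'w) \<Rightarrow> (('w \<Rightarrow> 'm::ab_group_add) \<Rightarrow> 'm) \<Rightarrow>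
   nat \<Rightarrow> ('w \<Rightarrow> 'm) \<Rightarrow> ('w \<Rightarrow> 'm)" where
  "nablaE Om d nabla0 n f =
     (\<lambda>w. if w \<in> Om n then nabla0 (homact Om 1 f w) + signm (n + 1) (f (d w)) else 0)"

definition flat_hom_connection ::
  "('k::field \<Rightarrow> 'w::ring_1) \<Rightarrow> (nat \<Rightarrow> 'w set) \<Rightarrow> ('w \<Rightarrow> 'w) \<Rightarrow>
   ('m::ab_group_add \<Rightarrow> 'w \<Rightarrow> 'm) \<Rightarrow> (('w \<Rightarrow> 'm) \<Rightarrow> 'm) \<Rightarrow> bool" where
  "flat_hom_connection iota Om d act nabla0 \<longleftrightarrow>
     hom_connection iota Om d act nabla0
   \<and> (\<forall>f\<in>HomA Om act 2. nabla0 (nablaE Om d nabla0 1 f) = 0)"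

definition cycles where
  "cycles Om d act nabla0 n =
     {f \<in> HomA Om act n. n = 0 \<or> nablaE Om d nabla0 (n - 1) f = (\<lambda>_. 0)}"

definition boundaries where
  "boundaries Om d act nabla0 n = nablaE Om d nabla0 n ` HomA Om act (Suc n)"

definition hclass where
  "hclass Om d act nabla0 n f =
     {g \<in> cycles Om d act nabla0 n. (\<lambda>x. g x - f x) \<in> boundaries Om d act nabla0 n}"

definition closedf :: "(nat \<Rightarrow> 'w::ring_1 set) \<Rightarrow> ('w \<Rightarrow> 'w) \<Rightarrow> nat \<Rightarrow> 'w set" where
  "closedf Om d m = {w \<in> Om m. d w = 0}"

definition exactf :: "(nat \<Rightarrow> 'w::ring_1 set) \<Rightarrow> ('w \<Rightarrow> 'w) \<Rightarrow> nat \<Rightarrow> 'w set" where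
  "exactf Om d m = (if m = 0 then {0} else d ` Om (m - 1))"

definition cclass :: "(nat \<Rightarrow> 'w::ring_1 set) \<Rightarrow> ('w \<Rightarrow> 'w) \<Rightarrow> nat \<Rightarrow> 'w \<Rightarrow> 'w set" where
  "cclass Om d m w = {v \<in> closedf Om d m. v - w \<in> exactf Om d m}"

end

theory Submission
  imports Defs
begin

lemma neg1_mult: "((-1::'a::ring_1) ^ j) * x = (if even j then x else - x)"
  by (simp add: minus_one_power_iff)

lemma signm_add: "signm j (a + b) = signm j a + signm j b"
  by (simp add: signm_def)
lemma signm_neg: "signm j (- a) = - signm j a"
  by (simp add: signm_def)
lemma signm_0: "signm j 0 = 0"
  by (simp add: signm_def)

locale hc =
  fixes iota :: "'k::field \<Rightarrow> 'w::ring_1"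
    and Om :: "nat \<Rightarrow> 'w set"
    and d :: "'w \<Rightarrow> 'w"
    and act :: "'m::ab_group_add \<Rightarrow> 'w \<Rightarrow> 'm"
    and nabla0 :: "('w \<Rightarrow> 'm) \<Rightarrow> 'm"
  assumes dga: "graded_dga iota Om d"
    and module: "right_module Om act"
    and flat: "flat_hom_connection iota Om d act nabla0"
begin

lemmas dgaL = dga[unfolded graded_dga_def]
lemma iota_add: "iota (a+b) = iota a + iota b" using dgaL[THEN conjunct2, THEN conjunct1] by blast
lemma iota_one: "iota 1 = 1" using dgaL[THEN conjunct1] by blast
lemma iota_minus1: "iota (-1) = -1"
proof -
  have "iota 0 = iota 0 + iota 0" using iota_add[of 0 0] by simp
  hence z: "iota 0 = 0" by simp
  have "iota ((-1) + 1) = iota (-1) + iota 1" by (rule iota_add)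
  hence "iota (-1) + 1 = 0" using z iota_one by simp
  thus ?thesis by (metis add_eq_0_iff2)
qed
lemma dga_Om: "\<forall>n. 0 \<in> Om n \<and> (\<forall>x\<in>Om n. \<forall>y\<in>Om n. x + y \<in> Om n)
          \<and> (\<forall>c. \<forall>x\<in>Om n. iota c * x \<in> Om n)" using dgaL[THEN conjunct2, THEN conjunct2, THEN conjunct2, THEN conjunct2, THEN conjunct1] .
lemma Om_zero: "0 \<in> Om n" using dga_Om by blast
lemma Om_add: "x \<in> Om n \<Longrightarrow> y \<in> Om n \<Longrightarrow> x + y \<in> Om n" using dga_Om by blast
lemma Om_scal: "x \<in> Om n \<Longrightarrow> iota c * x \<in> Om n" using dga_Om by blast
lemma Om_neg: "x \<in> Om n \<Longrightarrow> - x \<in> Om n"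
proof -
  assume "x \<in> Om n" hence "iota (-1) * x \<in> Om n" by (rule Om_scal)
  thus ?thesis by (simp add: iota_minus1)
qed
lemma Om_diff: "x \<in> Om n \<Longrightarrow> y \<in> Om n \<Longrightarrow> x - y \<in> Om n"
proof -
  assume "x \<in> Om n" "y \<in> Om n" hence "x + - y \<in> Om n" by (intro Om_add Om_neg)
  thus ?thesis by simp
qed
lemma Om_one: "1 \<in> Om 0" using dgaL[THEN conjunct2, THEN conjunct2, THEN conjunct2, THEN conjunct2, THEN conjunct2, THEN conjunct1] .
lemma Om_mult: "x \<in> Om n \<Longrightarrow> y \<in> Om m \<Longrightarrow> x * y \<in> Om (n + m)" using dgaL[THEN conjunct2, THEN conjunct2, THEN conjunct2, THEN conjunct2, THEN conjunct2, THEN conjunct2, THEN conjunct1] by blast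
lemma d_add: "d (x + y) = d x + d y" using dgaL[THEN conjunct2, THEN conjunct2, THEN conjunct2, THEN conjunct2, THEN conjunct2, THEN conjunct2, THEN conjunct2, THEN conjunct2, THEN conjunct1] by blast
lemma d_Om: "x \<in> Om n \<Longrightarrow> d x \<in> Om (Suc n)" using dgaL[THEN conjunct2, THEN conjunct2, THEN conjunct2, THEN conjunct2, THEN conjunct2, THEN conjunct2, THEN conjunct2, THEN conjunct2, THEN conjunct2, THEN conjunct2, THEN conjunct1] by blast
lemma d_d: "d (d x) = 0" using dgaL[THEN conjunct2, THEN conjunct2, THEN conjunct2, THEN conjunct2, THEN conjunct2, THEN conjunct2, THEN conjunct2, THEN conjunct2, THEN conjunct2, THEN conjunct2, THEN conjunct2, THEN conjunct1] by blast
lemma leib0: "x \<in> Om n \<Longrightarrow> y \<in> Om m \<Longrightarrow> d (x * y) = d x * y + (-1) ^ n * x * d y" using dgaL[THEN conjunct2, THEN conjunct2, THEN conjunct2, THEN conjunct2, THEN conjunct2, THEN conjunct2, THEN conjunct2, THEN conjunct2, THEN conjunct2, THEN conjunct2, THEN conjunct2, THEN conjunct2] by blast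
lemma leib: "x \<in> Om n \<Longrightarrow> y \<in> Om m \<Longrightarrow> d (x * y) = d x * y + (if even n then x * d y else - (x * d y))"
proof -
  assume "x \<in> Om n" "y \<in> Om m"
  hence "d (x * y) = d x * y + (-1) ^ n * x * d y" by (rule leib0)
  also have "(-1) ^ n * x * d y = (-1)^n * (x * d y)" by (simp add: mult.assoc)
  finally show ?thesis by (simp add: neg1_mult)
qed

lemma act_assoc: "a \<in> Om 0 \<Longrightarrow> b \<in> Om 0 \<Longrightarrow> act (act m a) b = act m (a * b)"
  using module by (simp add: right_module_def)
lemma act_addl: "a \<in> Om 0 \<Longrightarrow> act (m + m') a = act m a + act m' a"
  using module by (simp add: right_module_def)
lemma act_0l: "a \<in> Om 0 \<Longrightarrow> act 0 a = 0"
  using act_addl[of a 0 0] by simp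
lemma act_negl: "a \<in> Om 0 \<Longrightarrow> act (- m) a = - act m a"
proof -
  assume a: "a \<in> Om 0"
  have "act m a + act (- m) a = 0" using act_addl[OF a, of m "-m"] act_0l[OF a] by simp
  thus ?thesis by (metis neg_eq_iff_add_eq_0)
qed
lemma act_signm: "a \<in> Om 0 \<Longrightarrow> act (signm j m) a = signm j (act m a)"
  by (simp add: signm_def act_negl)

lemma HomA_add: "f \<in> HomA Om act n \<Longrightarrow> x \<in> Om n \<Longrightarrow> y \<in> Om n \<Longrightarrow> f (x + y) = f x + f y"
  by (simp add: HomA_def)
lemma HomA_lin: "f \<in> HomA Om act n \<Longrightarrow> x \<in> Om n \<Longrightarrow> a \<in> Om 0 \<Longrightarrow> f (x * a) = act (f x) a"
  by (simp add: HomA_def)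
lemma HomA_out: "f \<in> HomA Om act n \<Longrightarrow> x \<notin> Om n \<Longrightarrow> f x = 0"
  by (simp add: HomA_def)
lemma HomA_0: "f \<in> HomA Om act n \<Longrightarrow> f 0 = 0"
  using HomA_add[of f n 0 0] Om_zero by simp
lemma HomA_neg: "f \<in> HomA Om act n \<Longrightarrow> x \<in> Om n \<Longrightarrow> f (- x) = - f x"
proof -
  assume f: "f \<in> HomA Om act n" and x: "x \<in> Om n"
  have "f x + f (- x) = 0" using HomA_add[OF f x Om_neg[OF x]] HomA_0[OF f] by simp
  thus ?thesis by (metis neg_eq_iff_add_eq_0)
qed
lemma HomA_diff: "f \<in> HomA Om act n \<Longrightarrow> x \<in> Om n \<Longrightarrow> y \<in> Om n \<Longrightarrow> f (x - y) = f x - f y"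
proof -
  assume f: "f \<in> HomA Om act n" and x: "x \<in> Om n" and y: "y \<in> Om n"
  have "f (x + - y) = f x + f (- y)" by (rule HomA_add[OF f x Om_neg[OF y]])
  thus ?thesis by (simp only: HomA_neg[OF f y] diff_conv_add_uminus)
qed
lemma HomA_sgn: "f \<in> HomA Om act n \<Longrightarrow> x \<in> Om n \<Longrightarrow> f (if even j then x else - x) = signm j (f x)"
  by (simp add: signm_def HomA_neg)
lemma Om_sgn: "x \<in> Om n \<Longrightarrow> (if even j then x else - x) \<in> Om n"
  by (simp add: Om_neg)

lemma HomA_plus:
  assumes f: "f \<in> HomA Om act n" and g: "g \<in> HomA Om act n"
  shows "(\<lambda>x. f x + g x) \<in> HomA Om act n"
  unfolding HomA_def
proof (intro CollectI conjI ballI allI impI)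
  fix x y assume x: "x \<in> Om n" and y: "y \<in> Om n"
  show "f (x + y) + g (x + y) = (f x + g x) + (f y + g y)"
    by (simp only: HomA_add[OF f x y] HomA_add[OF g x y] add_ac)
next
  fix x a assume x: "x \<in> Om n" and a: "a \<in> Om 0"
  show "f (x * a) + g (x * a) = act (f x + g x) a"
    by (simp only: HomA_lin[OF f x a] HomA_lin[OF g x a] act_addl[OF a])
next
  fix x assume x: "x \<notin> Om n"
  show "f x + g x = 0" by (simp add: HomA_out[OF f x] HomA_out[OF g x])
qed
lemma HomA_uminus:
  assumes f: "f \<in> HomA Om act n"
  shows "(\<lambda>x. - f x) \<in> HomA Om act n"
  unfolding HomA_def
proof (intro CollectI conjI ballI allI impI)
  fix x y assume x: "x \<in> Om n" and y: "y \<in> Om n"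
  show "- f (x + y) = - f x + - f y"
    by (simp only: HomA_add[OF f x y] minus_add_distrib)
next
  fix x a assume x: "x \<in> Om n" and a: "a \<in> Om 0"
  show "- f (x * a) = act (- f x) a"
    by (simp only: HomA_lin[OF f x a] act_negl[OF a])
next
  fix x assume x: "x \<notin> Om n"
  show "- f x = 0" by (simp add: HomA_out[OF f x])
qed
lemma HomA_zero: "(\<lambda>x. 0) \<in> HomA Om act n"
  unfolding HomA_def by (simp add: act_0l)
lemma HomA_signm: "f \<in> HomA Om act n \<Longrightarrow> (\<lambda>x. signm j (f x)) \<in> HomA Om act n"
  using HomA_uminus[of f n] by (cases "even j") (simp_all add: signm_def)

lemma homact_HomA:
  assumes f: "f \<in> HomA Om act (m + k)" and w: "w \<in> Om m"
  shows "homact Om k f w \<in> HomA Om act k"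
  unfolding HomA_def homact_def
proof (intro CollectI conjI ballI allI impI)
  fix x y assume x: "x \<in> Om k" and y: "y \<in> Om k"
  have "f (w * (x + y)) = f (w * x + w * y)" by (simp add: distrib_left)
  also have "\<dots> = f (w * x) + f (w * y)" using HomA_add[OF f] Om_mult[OF w x] Om_mult[OF w y] by simp
  finally show "(if x + y \<in> Om k then f (w * (x + y)) else 0) =
       (if x \<in> Om k then f (w * x) else 0) + (if y \<in> Om k then f (w * y) else 0)"
    using x y Om_add by simp
next
  fix x a assume x: "x \<in> Om k" and a: "a \<in> Om 0"
  have xa: "x * a \<in> Om k" using Om_mult[OF x a] by simp
  have "f (w * (x * a)) = f ((w * x) * a)" by (simp add: mult.assoc)
  also have "\<dots> = act (f (w * x)) a" using HomA_lin[OF f Om_mult[OF w x] a] .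
  finally show "(if x * a \<in> Om k then f (w * (x * a)) else 0) = act (if x \<in> Om k then f (w * x) else 0) a"
    using x xa by simp
next
  fix x assume "x \<notin> Om k" thus "(if x \<in> Om k then f (w * x) else 0) = 0" by simp
qed

lemma homact_homact:
  assumes x: "x \<in> Om i" and j: "j = i + k"
  shows "homact Om k (homact Om j f w) x = homact Om k f (w * x)"
proof (rule ext)
  fix y show "homact Om k (homact Om j f w) x y = homact Om k f (w * x) y"
    using Om_mult[OF x, of y k] j by (simp add: homact_def mult.assoc)
qed

lemma homact_one: "f \<in> HomA Om act n \<Longrightarrow> homact Om n f 1 = f"
  by (rule ext) (simp add: homact_def HomA_out)

lemma nabla0_add: "f \<in> HomA Om act 1 \<Longrightarrow> g \<in> HomA Om act 1 \<Longrightarrow> nabla0 (\<lambda>x. f x + g x) = nabla0 f + nabla0 g"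
  using flat by (simp add: flat_hom_connection_def hom_connection_def)
lemma nabla0_zero: "nabla0 (\<lambda>x. 0) = 0"
  using nabla0_add[OF HomA_zero HomA_zero] by simp
lemma nabla0_neg: "f \<in> HomA Om act 1 \<Longrightarrow> nabla0 (\<lambda>x. - f x) = - nabla0 f"
  using nabla0_add[of f "\<lambda>x. - f x"] HomA_uminus[of f 1] nabla0_zero by (simp add: eq_neg_iff_add_eq_0 add.commute)
lemma nabla0_signm: "f \<in> HomA Om act 1 \<Longrightarrow> nabla0 (\<lambda>x. signm j (f x)) = signm j (nabla0 f)"
  by (cases "even j") (simp_all add: signm_def nabla0_neg)
lemma nabla0_leib: "f \<in> HomA Om act 1 \<Longrightarrow> a \<in> Om 0 \<Longrightarrow> nabla0 (homact Om 1 f a) = act (nabla0 f) a + f (d a)"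
  using flat by (simp add: flat_hom_connection_def hom_connection_def)
lemma flat2: "f \<in> HomA Om act 2 \<Longrightarrow> nabla0 (nablaE Om d nabla0 1 f) = 0"
  using flat by (simp add: flat_hom_connection_def)

lemma nablaE_at: "x \<in> Om n \<Longrightarrow> nablaE Om d nabla0 n f x = nabla0 (homact Om 1 f x) + signm (Suc n) (f (d x))"
  by (simp add: nablaE_def)
lemma nablaE_out: "x \<notin> Om n \<Longrightarrow> nablaE Om d nabla0 n f x = 0"
  by (simp add: nablaE_def)

lemma homact1_HomA: "f \<in> HomA Om act (Suc n) \<Longrightarrow> x \<in> Om n \<Longrightarrow> homact Om 1 f x \<in> HomA Om act 1"
  using homact_HomA[of f n 1 x] by simp


lemma signm_signm: "signm i (signm j a) = (if even (i + j) then a else - a)"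
  by (simp add: signm_def)

lemma homact1_plus: "f \<in> HomA Om act (Suc n) \<Longrightarrow> x \<in> Om n \<Longrightarrow> y \<in> Om n \<Longrightarrow>
   homact Om 1 f (x + y) = (\<lambda>z. homact Om 1 f x z + homact Om 1 f y z)"
proof (rule ext)
  fix z assume f: "f \<in> HomA Om act (Suc n)" and x: "x \<in> Om n" and y: "y \<in> Om n"
  show "homact Om 1 f (x + y) z = homact Om 1 f x z + homact Om 1 f y z"
  proof (cases "z \<in> Om 1")
    case True
    have xz: "x * z \<in> Om (Suc n)" using Om_mult[OF x True] by simp
    have yz: "y * z \<in> Om (Suc n)" using Om_mult[OF y True] by simp
    have "f ((x + y) * z) = f (x * z) + f (y * z)"
      by (simp only: distrib_right HomA_add[OF f xz yz])
    thus ?thesis using True by (simp add: homact_def)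
  qed (simp add: homact_def)
qed

lemma nablaE_HomA:
  assumes f: "f \<in> HomA Om act (Suc n)"
  shows "nablaE Om d nabla0 n f \<in> HomA Om act n"
  unfolding HomA_def
proof (intro CollectI conjI ballI allI impI)
  fix x y assume x: "x \<in> Om n" and y: "y \<in> Om n"
  have xy: "x + y \<in> Om n" by (rule Om_add[OF x y])
  have "nabla0 (homact Om 1 f (x + y)) = nabla0 (homact Om 1 f x) + nabla0 (homact Om 1 f y)"
    by (simp only: homact1_plus[OF f x y] nabla0_add[OF homact1_HomA[OF f x] homact1_HomA[OF f y]])
  moreover have "f (d (x + y)) = f (d x) + f (d y)"
    by (simp only: d_add HomA_add[OF f d_Om[OF x] d_Om[OF y]])
  ultimately show "nablaE Om d nabla0 n f (x + y) = nablaE Om d nabla0 n f x + nablaE Om d nabla0 n f y"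
    by (simp only: nablaE_at[OF xy] nablaE_at[OF x] nablaE_at[OF y] signm_add add_ac)
next
  fix x a assume x: "x \<in> Om n" and a: "a \<in> Om 0"
  have xa: "x * a \<in> Om n" using Om_mult[OF x a] by simp
  have da: "d a \<in> Om 1" using d_Om[OF a] by simp
  have dx: "d x \<in> Om (Suc n)" by (rule d_Om[OF x])
  have xda: "x * d a \<in> Om (Suc n)" using Om_mult[OF x da] by simp
  have dxa: "d x * a \<in> Om (Suc n)" using Om_mult[OF dx a] by simp
  have g: "homact Om 1 f x \<in> HomA Om act 1" by (rule homact1_HomA[OF f x])
  have "homact Om 1 f (x * a) = homact Om 1 (homact Om 1 f x) a"
    by (rule homact_homact[OF a, symmetric]) simp
  hence N: "nabla0 (homact Om 1 f (x * a)) = act (nabla0 (homact Om 1 f x)) a + f (x * d a)"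
    using nabla0_leib[OF g a] da by (simp add: homact_def)
  have "f (d (x * a)) = f (d x * a + (if even n then x * d a else - (x * d a)))"
    by (simp only: leib[OF x a])
  also have "\<dots> = f (d x * a) + f (if even n then x * d a else - (x * d a))"
    by (rule HomA_add[OF f dxa Om_sgn[OF xda]])
  also have "\<dots> = act (f (d x)) a + signm n (f (x * d a))"
    by (simp only: HomA_lin[OF f dx a] HomA_sgn[OF f xda])
  finally have D: "f (d (x * a)) = act (f (d x)) a + signm n (f (x * d a))" .
  show "nablaE Om d nabla0 n f (x * a) = act (nablaE Om d nabla0 n f x) a"
    unfolding nablaE_at[OF xa] nablaE_at[OF x] N D
    by (simp add: act_addl[OF a] act_signm[OF a] act_negl[OF a] signm_add signm_def)
next
  fix x assume "x \<notin> Om n" thus "nablaE Om d nabla0 n f x = 0" by (rule nablaE_out)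
qed


lemma chain:
  assumes f: "f \<in> HomA Om act (Suc (Suc j))"
  shows "nablaE Om d nabla0 j (nablaE Om d nabla0 (Suc j) f) = (\<lambda>_. 0)"
proof (rule ext)
  fix x
  show "nablaE Om d nabla0 j (nablaE Om d nabla0 (Suc j) f) x = 0"
  proof (cases "x \<in> Om j")
    case False thus ?thesis by (rule nablaE_out)
  next
    case x: True
    define g where "g = nablaE Om d nabla0 (Suc j) f"
    have dx: "d x \<in> Om (Suc j)" by (rule d_Om[OF x])
    have G1: "g (d x) = nabla0 (homact Om 1 f (d x))"
      unfolding g_def nablaE_at[OF dx] d_d HomA_0[OF f] signm_0 by simp
    define h where "h = homact Om 2 f x"
    have h: "h \<in> HomA Om act 2" unfolding h_def
      by (rule homact_HomA[of f j 2 x]) (use f x in \<open>simp_all add: numeral_2_eq_2\<close>)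
    define A where "A = nablaE Om d nabla0 1 h"
    have A: "A \<in> HomA Om act 1" unfolding A_def
      by (rule nablaE_HomA) (use h in \<open>simp add: numeral_2_eq_2\<close>)
    have A0: "nabla0 A = 0" unfolding A_def by (rule flat2[OF h])
    define B where "B = (\<lambda>y. signm (Suc (Suc j)) (homact Om 1 f (d x) y))"
    have B: "B \<in> HomA Om act 1" unfolding B_def
      by (rule HomA_signm[OF homact1_HomA[OF f dx]])
    have B0: "nabla0 B = signm (Suc (Suc j)) (nabla0 (homact Om 1 f (d x)))"
      unfolding B_def by (rule nabla0_signm[OF homact1_HomA[OF f dx]])
    have C: "homact Om 1 g x = (\<lambda>y. A y + B y)"
    proof (rule ext)
      fix y show "homact Om 1 g x y = A y + B y"
      proof (cases "y \<in> Om 1")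
        case False thus ?thesis unfolding A_def B_def
          by (simp add: homact_def nablaE_out signm_0)
      next
        case y: True
        have xy: "x * y \<in> Om (Suc j)" using Om_mult[OF x y] by simp
        have dy: "d y \<in> Om 2" using d_Om[OF y] by (simp add: numeral_2_eq_2)
        have dxy: "d x * y \<in> Om (Suc (Suc j))" using Om_mult[OF dx y] by simp
        have xdy: "x * d y \<in> Om (Suc (Suc j))" using Om_mult[OF x dy] by (simp add: numeral_2_eq_2)
        have "f (d (x * y)) = f (d x * y + (if even j then x * d y else - (x * d y)))"
          by (simp only: leib[OF x y])
        also have "\<dots> = f (d x * y) + signm j (f (x * d y))"
          by (simp only: HomA_add[OF f dxy Om_sgn[OF xdy]] HomA_sgn[OF f xdy])
        finally have D: "f (d (x * y)) = f (d x * y) + signm j (f (x * d y))" .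
        have L: "homact Om 1 g x y = nabla0 (homact Om 1 f (x * y)) + signm (Suc (Suc j)) (f (d (x * y)))"
          using y unfolding g_def by (simp add: homact_def nablaE_at[OF xy])
        have hh: "homact Om 1 h y = homact Om 1 f (x * y)" unfolding h_def
          by (rule homact_homact[OF y]) simp
        have hdy: "h (d y) = f (x * d y)" unfolding h_def homact_def using dy by simp
        have Ay: "A y = nabla0 (homact Om 1 f (x * y)) + f (x * d y)"
          unfolding A_def nablaE_at[OF y] hh hdy by (simp add: signm_def)
        have By: "B y = signm (Suc (Suc j)) (f (d x * y))"
          unfolding B_def homact_def using y by simp
        show ?thesis unfolding L Ay By D
          by (simp add: signm_def)
      qed
    qed
    have "nabla0 (homact Om 1 g x) = signm (Suc (Suc j)) (nabla0 (homact Om 1 f (d x)))"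
      unfolding C nabla0_add[OF A B] A0 B0 by simp
    thus ?thesis unfolding g_def[symmetric] nablaE_at[OF x] G1
      by (simp add: signm_def)
  qed
qed


lemma cyc_HomA: "f \<in> cycles Om d act nabla0 n \<Longrightarrow> f \<in> HomA Om act n"
  by (simp add: cycles_def)
lemma cyc_eq: "f \<in> cycles Om d act nabla0 (Suc j) \<Longrightarrow> nablaE Om d nabla0 j f = (\<lambda>_. 0)"
  by (simp add: cycles_def)

lemma cycles_homact:
  assumes fc: "f \<in> cycles Om d act nabla0 n" and w: "w \<in> closedf Om d m" and n: "n = m + k"
  shows "homact Om k f w \<in> cycles Om d act nabla0 k"
proof -
  have wO: "w \<in> Om m" and dw: "d w = 0" using w by (auto simp: closedf_def)
  have fH: "f \<in> HomA Om act (m + k)" using cyc_HomA[OF fc] n by simp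
  have H: "homact Om k f w \<in> HomA Om act k" by (rule homact_HomA[OF fH wO])
  show ?thesis
  proof (cases k)
    case 0 thus ?thesis using H by (simp add: cycles_def)
  next
    case (Suc i)
    have fc': "f \<in> cycles Om d act nabla0 (Suc (m + i))" using fc n Suc by simp
    have cyc: "nablaE Om d nabla0 (m + i) f = (\<lambda>_. 0)" by (rule cyc_eq[OF fc'])
    have fH': "f \<in> HomA Om act (Suc (m + i))" using fH Suc by simp
    have "nablaE Om d nabla0 i (homact Om (Suc i) f w) = (\<lambda>_. 0)"
    proof (rule ext)
      fix x show "nablaE Om d nabla0 i (homact Om (Suc i) f w) x = 0"
      proof (cases "x \<in> Om i")
        case False thus ?thesis by (rule nablaE_out)
      next
        case x: True
        have wx: "w * x \<in> Om (m + i)" by (rule Om_mult[OF wO x])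
        have dx: "d x \<in> Om (Suc i)" by (rule d_Om[OF x])
        have wdx: "w * d x \<in> Om (Suc (m + i))" using Om_mult[OF wO dx] by simp
        have "f (d (w * x)) = f (if even m then w * d x else - (w * d x))"
          by (simp add: leib[OF wO x] dw)
        also have "\<dots> = signm m (f (w * d x))" by (rule HomA_sgn[OF fH' wdx])
        finally have D: "f (d (w * x)) = signm m (f (w * d x))" .
        have Z: "nabla0 (homact Om 1 f (w * x)) + signm (Suc (m + i)) (f (d (w * x))) = 0"
          using fun_cong[OF cyc, of "w * x"] unfolding nablaE_at[OF wx] .
        have hh: "homact Om 1 (homact Om (Suc i) f w) x = homact Om 1 f (w * x)"
          by (rule homact_homact[OF x]) simp
        have hd: "homact Om (Suc i) f w (d x) = f (w * d x)" using dx by (simp add: homact_def)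
        show ?thesis unfolding nablaE_at[OF x] hh hd using Z unfolding D
          by (auto simp: signm_def split: if_splits)
      qed
    qed
    thus ?thesis using H Suc by (simp add: cycles_def)
  qed
qed


lemma L1:
  assumes u: "u \<in> HomA Om act (Suc n)" and w: "w \<in> closedf Om d m" and n: "n = m + k"
  shows "homact Om k (nablaE Om d nabla0 n u) w = nablaE Om d nabla0 k (homact Om (Suc k) u w)"
proof (rule ext)
  have wO: "w \<in> Om m" and dw: "d w = 0" using w by (auto simp: closedf_def)
  fix x show "homact Om k (nablaE Om d nabla0 n u) w x = nablaE Om d nabla0 k (homact Om (Suc k) u w) x"
  proof (cases "x \<in> Om k")
    case False thus ?thesis by (simp add: homact_def nablaE_out)
  next
    case x: True
    have wx: "w * x \<in> Om n" using Om_mult[OF wO x] n by simp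
    have dx: "d x \<in> Om (Suc k)" by (rule d_Om[OF x])
    have wdx: "w * d x \<in> Om (Suc n)" using Om_mult[OF wO dx] n by simp
    have "u (d (w * x)) = u (if even m then w * d x else - (w * d x))"
      by (simp add: leib[OF wO x] dw)
    also have "\<dots> = signm m (u (w * d x))" by (rule HomA_sgn[OF u wdx])
    finally have D: "u (d (w * x)) = signm m (u (w * d x))" .
    have hh: "homact Om 1 (homact Om (Suc k) u w) x = homact Om 1 u (w * x)"
      by (rule homact_homact[OF x]) simp
    have hd: "homact Om (Suc k) u w (d x) = u (w * d x)" using dx by (simp add: homact_def)
    have LHS: "homact Om k (nablaE Om d nabla0 n u) w x = nablaE Om d nabla0 n u (w * x)"
      using x by (simp add: homact_def)
    show ?thesis unfolding LHS nablaE_at[OF x] nablaE_at[OF wx] hh hd D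
      using n by (simp add: signm_def)
  qed
qed

lemma L2:
  assumes fc: "f \<in> cycles Om d act nabla0 n" and v: "v \<in> Om j" and n: "n = Suc j + k"
  shows "nablaE Om d nabla0 k (homact Om (Suc k) f v) = (\<lambda>x. - signm n (homact Om k f (d v) x))"
proof (rule ext)
  have fH: "f \<in> HomA Om act n" by (rule cyc_HomA[OF fc])
  have fc': "f \<in> cycles Om d act nabla0 (Suc (j + k))" using fc n by simp
  have cyc: "nablaE Om d nabla0 (j + k) f = (\<lambda>_. 0)" by (rule cyc_eq[OF fc'])
  fix x show "nablaE Om d nabla0 k (homact Om (Suc k) f v) x = - signm n (homact Om k f (d v) x)"
  proof (cases "x \<in> Om k")
    case False thus ?thesis by (simp add: homact_def nablaE_out signm_0)
  next
    case x: True
    have vx: "v * x \<in> Om (j + k)" by (rule Om_mult[OF v x])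
    have dx: "d x \<in> Om (Suc k)" by (rule d_Om[OF x])
    have dv: "d v \<in> Om (Suc j)" by (rule d_Om[OF v])
    have vdx: "v * d x \<in> Om n" using Om_mult[OF v dx] n by simp
    have dvx: "d v * x \<in> Om n" using Om_mult[OF dv x] n by simp
    have "f (d (v * x)) = f (d v * x + (if even j then v * d x else - (v * d x)))"
      by (simp only: leib[OF v x])
    also have "\<dots> = f (d v * x) + signm j (f (v * d x))"
      by (simp only: HomA_add[OF fH dvx Om_sgn[OF vdx]] HomA_sgn[OF fH vdx])
    finally have D: "f (d (v * x)) = f (d v * x) + signm j (f (v * d x))" .
    have Z: "nabla0 (homact Om 1 f (v * x)) + signm (Suc (j + k)) (f (d (v * x))) = 0"
      using fun_cong[OF cyc, of "v * x"] unfolding nablaE_at[OF vx] .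
    hence N: "nabla0 (homact Om 1 f (v * x)) = - signm (Suc (j + k)) (f (d v * x) + signm j (f (v * d x)))"
      unfolding D by (simp add: eq_neg_iff_add_eq_0)
    have hh: "homact Om 1 (homact Om (Suc k) f v) x = homact Om 1 f (v * x)"
      by (rule homact_homact[OF x]) simp
    have hd: "homact Om (Suc k) f v (d x) = f (v * d x)" using dx by (simp add: homact_def)
    have R: "homact Om k f (d v) x = f (d v * x)" using x by (simp add: homact_def)
    show ?thesis unfolding nablaE_at[OF x] hh hd N R
      using n by (simp add: signm_def)
  qed
qed

lemma nablaE_plus:
  assumes f: "f \<in> HomA Om act (Suc n)" and g: "g \<in> HomA Om act (Suc n)"
  shows "nablaE Om d nabla0 n (\<lambda>x. f x + g x) = (\<lambda>x. nablaE Om d nabla0 n f x + nablaE Om d nabla0 n g x)"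
proof (rule ext)
  fix x show "nablaE Om d nabla0 n (\<lambda>x. f x + g x) x = nablaE Om d nabla0 n f x + nablaE Om d nabla0 n g x"
  proof (cases "x \<in> Om n")
    case False thus ?thesis by (simp add: nablaE_out)
  next
    case x: True
    have h: "homact Om 1 (\<lambda>x. f x + g x) x = (\<lambda>z. homact Om 1 f x z + homact Om 1 g x z)"
      by (rule ext) (simp add: homact_def)
    show ?thesis unfolding nablaE_at[OF x] h nabla0_add[OF homact1_HomA[OF f x] homact1_HomA[OF g x]]
      by (simp add: signm_add add_ac)
  qed
qed

lemma nablaE_uminus:
  assumes f: "f \<in> HomA Om act (Suc n)"
  shows "nablaE Om d nabla0 n (\<lambda>x. - f x) = (\<lambda>x. - nablaE Om d nabla0 n f x)"
proof (rule ext)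
  fix x show "nablaE Om d nabla0 n (\<lambda>x. - f x) x = - nablaE Om d nabla0 n f x"
  proof (cases "x \<in> Om n")
    case False thus ?thesis by (simp add: nablaE_out)
  next
    case x: True
    have h: "homact Om 1 (\<lambda>x. - f x) x = (\<lambda>z. - homact Om 1 f x z)"
      by (rule ext) (simp add: homact_def)
    show ?thesis unfolding nablaE_at[OF x] h nabla0_neg[OF homact1_HomA[OF f x]]
      by (simp add: signm_neg)
  qed
qed

lemma B_add: "b1 \<in> boundaries Om d act nabla0 k \<Longrightarrow> b2 \<in> boundaries Om d act nabla0 k \<Longrightarrow>
  (\<lambda>x. b1 x + b2 x) \<in> boundaries Om d act nabla0 k"
  unfolding boundaries_def
proof -
  assume "b1 \<in> nablaE Om d nabla0 k ` HomA Om act (Suc k)" "b2 \<in> nablaE Om d nabla0 k ` HomA Om act (Suc k)"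
  then obtain u1 u2 where u1: "u1 \<in> HomA Om act (Suc k)" "b1 = nablaE Om d nabla0 k u1"
    and u2: "u2 \<in> HomA Om act (Suc k)" "b2 = nablaE Om d nabla0 k u2" by blast
  have "(\<lambda>x. b1 x + b2 x) = nablaE Om d nabla0 k (\<lambda>x. u1 x + u2 x)"
    unfolding u1(2) u2(2) nablaE_plus[OF u1(1) u2(1)] ..
  thus "(\<lambda>x. b1 x + b2 x) \<in> nablaE Om d nabla0 k ` HomA Om act (Suc k)"
    using HomA_plus[OF u1(1) u2(1)] by blast
qed

lemma B_neg: "b \<in> boundaries Om d act nabla0 k \<Longrightarrow> (\<lambda>x. - b x) \<in> boundaries Om d act nabla0 k"
  unfolding boundaries_def
proof -
  assume "b \<in> nablaE Om d nabla0 k ` HomA Om act (Suc k)"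
  then obtain u where u: "u \<in> HomA Om act (Suc k)" "b = nablaE Om d nabla0 k u" by blast
  have "(\<lambda>x. - b x) = nablaE Om d nabla0 k (\<lambda>x. - u x)"
    unfolding u(2) nablaE_uminus[OF u(1)] ..
  thus "(\<lambda>x. - b x) \<in> nablaE Om d nabla0 k ` HomA Om act (Suc k)"
    using HomA_uminus[OF u(1)] by blast
qed

lemma B_zero: "(\<lambda>_. 0) \<in> boundaries Om d act nabla0 k"
proof -
  have "nablaE Om d nabla0 k (\<lambda>_. 0) = (\<lambda>_. 0)"
    by (rule ext) (simp add: nablaE_def homact_def nabla0_zero signm_0)
  thus ?thesis unfolding boundaries_def using HomA_zero by (metis image_eqI)
qed

lemma B_signm: "b \<in> boundaries Om d act nabla0 k \<Longrightarrow> (\<lambda>x. signm j (b x)) \<in> boundaries Om d act nabla0 k"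
  using B_neg[of b k] by (cases "even j") (simp_all add: signm_def)

lemma hclass_eq:
  assumes b: "(\<lambda>x. g' x - g x) \<in> boundaries Om d act nabla0 k"
  shows "hclass Om d act nabla0 k g' = hclass Om d act nabla0 k g"
  unfolding hclass_def
proof (intro Collect_cong conj_cong refl iffI)
  fix h
  assume "(\<lambda>x. h x - g' x) \<in> boundaries Om d act nabla0 k"
  from B_add[OF this b] show "(\<lambda>x. h x - g x) \<in> boundaries Om d act nabla0 k" by simp
next
  fix h
  assume "(\<lambda>x. h x - g x) \<in> boundaries Om d act nabla0 k"
  from B_add[OF this B_neg[OF b]] show "(\<lambda>x. h x - g' x) \<in> boundaries Om d act nabla0 k" by simp
qed


lemma b2:
  assumes fc: "f \<in> cycles Om d act nabla0 n" and mn: "m \<le> n"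
    and f': "f' \<in> hclass Om d act nabla0 n f" and w': "w' \<in> cclass Om d m w"
  shows "hclass Om d act nabla0 (n - m) (homact Om (n - m) f' w')
       = hclass Om d act nabla0 (n - m) (homact Om (n - m) f w)"
proof -
  define k where "k = n - m"
  have n: "n = m + k" using mn unfolding k_def by simp
  have fb: "(\<lambda>x. f' x - f x) \<in> boundaries Om d act nabla0 n" using f' by (simp add: hclass_def)
  then obtain u where u: "u \<in> HomA Om act (Suc n)" and ueq: "(\<lambda>x. f' x - f x) = nablaE Om d nabla0 n u"
    unfolding boundaries_def by blast
  have w'c: "w' \<in> closedf Om d m" and ex: "w' - w \<in> exactf Om d m" using w' by (auto simp: cclass_def)
  have w'O: "w' \<in> Om m" using w'c by (simp add: closedf_def)
  have wO: "w \<in> Om m"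
  proof -
    have "w' - w \<in> Om m"
    proof (cases "m = 0")
      case True thus ?thesis using ex Om_zero by (simp add: exactf_def)
    next
      case False
      then obtain j where j: "m = Suc j" by (cases m) auto
      then obtain v where "v \<in> Om j" "w' - w = d v" using ex by (auto simp: exactf_def)
      thus ?thesis using d_Om j by simp
    qed
    hence "w' - (w' - w) \<in> Om m" by (rule Om_diff[OF w'O])
    thus ?thesis by simp
  qed
  have fH: "f \<in> HomA Om act n" by (rule cyc_HomA[OF fc])
  have T1: "homact Om k (\<lambda>x. f' x - f x) w' \<in> boundaries Om d act nabla0 k"
  proof -
    have "homact Om (Suc k) u w' \<in> HomA Om act (Suc k)"
      by (rule homact_HomA[OF _ w'O]) (use u n in simp)
    moreover have "homact Om k (\<lambda>x. f' x - f x) w' = nablaE Om d nabla0 k (homact Om (Suc k) u w')"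
      unfolding ueq by (rule L1[OF u w'c n])
    ultimately show ?thesis unfolding boundaries_def by blast
  qed
  have T2: "homact Om k f (w' - w) \<in> boundaries Om d act nabla0 k"
  proof (cases "m = 0")
    case True
    hence "w' - w = 0" using ex by (simp add: exactf_def)
    hence "homact Om k f (w' - w) = (\<lambda>_. 0)" by (intro ext) (simp add: homact_def HomA_0[OF fH])
    thus ?thesis using B_zero by simp
  next
    case False
    then obtain j where j: "m = Suc j" by (cases m) auto
    then obtain v where v: "v \<in> Om j" and dv: "w' - w = d v" using ex by (auto simp: exactf_def)
    have n': "n = Suc j + k" using n j by simp
    have H: "homact Om (Suc k) f v \<in> HomA Om act (Suc k)"
      by (rule homact_HomA[OF _ v]) (use fH n' in simp)
    have "(\<lambda>x. - signm n (homact Om k f (d v) x)) \<in> boundaries Om d act nabla0 k"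
      unfolding L2[OF fc v n', symmetric] boundaries_def using H by blast
    hence "(\<lambda>x. signm n (- (- signm n (homact Om k f (d v) x)))) \<in> boundaries Om d act nabla0 k"
      by (rule B_signm[OF B_neg])
    moreover have "(\<lambda>x. signm n (- (- signm n (homact Om k f (d v) x)))) = homact Om k f (d v)"
      by (rule ext) (simp add: signm_def)
    ultimately show ?thesis using dv by simp
  qed
  have dec: "(\<lambda>x. homact Om k f' w' x - homact Om k f w x)
      = (\<lambda>x. homact Om k (\<lambda>x. f' x - f x) w' x + homact Om k f (w' - w) x)"
  proof (rule ext)
    fix x show "homact Om k f' w' x - homact Om k f w x
      = homact Om k (\<lambda>x. f' x - f x) w' x + homact Om k f (w' - w) x"
    proof (cases "x \<in> Om k")
      case False thus ?thesis by (simp add: homact_def)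
    next
      case x: True
      have a: "w' * x \<in> Om n" using Om_mult[OF w'O x] n by simp
      have b: "w * x \<in> Om n" using Om_mult[OF wO x] n by simp
      have "f ((w' - w) * x) = f (w' * x) - f (w * x)"
        by (simp only: left_diff_distrib HomA_diff[OF fH a b])
      thus ?thesis using x by (simp add: homact_def)
    qed
  qed
  have "(\<lambda>x. homact Om k f' w' x - homact Om k f w x) \<in> boundaries Om d act nabla0 k"
    unfolding dec by (rule B_add[OF T1 T2])
  thus ?thesis unfolding k_def[symmetric] by (rule hclass_eq)
qed

end
theorem corollary3p5:
  fixes iota :: "'k::field \<Rightarrow> 'w::ring_1"
    and Om :: "nat \<Rightarrow> 'w set"
    and d :: "'w \<Rightarrow> 'w"
    and act :: "'m::ab_group_add \<Rightarrow> 'w \<Rightarrow> 'm"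
    and nabla0 :: "('w \<Rightarrow> 'm) \<Rightarrow> 'm"
  assumes dga: "graded_dga iota Om d"
    and module: "right_module Om act"
    and flat: "flat_hom_connection iota Om d act nabla0"
  shows
    \<comment> \<open>(a) the nabla_n are maps Hom(\<Omega>^(n+1)) \<rightarrow> Hom(\<Omega>^n) forming a chain complex\<close>
    "(\<forall>n. \<forall>f\<in>HomA Om act (Suc n). nablaE Om d nabla0 n f \<in> HomA Om act n)
   \<and> (\<forall>f\<in>HomA Om act 2. nabla0 (nablaE Om d nabla0 1 f) = 0)
   \<and> (\<forall>n\<ge>1. \<forall>f\<in>HomA Om act (Suc n).
        nablaE Om d nabla0 (n - 1) (nablaE Om d nabla0 n f) = (\<lambda>_. 0))
    \<comment> \<open>(b) the action of \<Omega>A descends to an action of H^*(A) on H_*(A;M,nabla_*)\<close>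
   \<and> (\<forall>n m f w. m \<le> n \<longrightarrow> f \<in> cycles Om d act nabla0 n \<longrightarrow> w \<in> closedf Om d m \<longrightarrow>
        homact Om (n - m) f w \<in> cycles Om d act nabla0 (n - m)
      \<and> (\<forall>f'\<in>hclass Om d act nabla0 n f. \<forall>w'\<in>cclass Om d m w.
           hclass Om d act nabla0 (n - m) (homact Om (n - m) f' w')
         = hclass Om d act nabla0 (n - m) (homact Om (n - m) f w)))
   \<and> (\<forall>n f. f \<in> cycles Om d act nabla0 n \<longrightarrow>
        hclass Om d act nabla0 n (homact Om n f 1) = hclass Om d act nabla0 n f)
   \<and> (\<forall>n m m' f w w'. m + m' \<le> n \<longrightarrow> f \<in> cycles Om d act nabla0 n \<longrightarrow>
        w \<in> closedf Om d m \<longrightarrow> w' \<in> closedf Om d m' \<longrightarrow>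
        hclass Om d act nabla0 (n - (m + m'))
          (homact Om (n - (m + m')) (homact Om (n - m) f w) w')
      = hclass Om d act nabla0 (n - (m + m')) (homact Om (n - (m + m')) f (w * w')))"
  proof -
  interpret hc iota Om d act nabla0 using dga module flat by unfold_locales
  have A1: "\<forall>n. \<forall>f\<in>HomA Om act (Suc n). nablaE Om d nabla0 n f \<in> HomA Om act n"
    using nablaE_HomA by blast
  have A2: "\<forall>f\<in>HomA Om act 2. nabla0 (nablaE Om d nabla0 1 f) = 0"
    using flat2 by blast
  have A3: "\<forall>n\<ge>1. \<forall>f\<in>HomA Om act (Suc n).
        nablaE Om d nabla0 (n - 1) (nablaE Om d nabla0 n f) = (\<lambda>_. 0)"
  proof (intro allI impI ballI)
    fix n f assume n: "1 \<le> n" and f: "f \<in> HomA Om act (Suc n)"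
    then obtain j where j: "n = Suc j" by (cases n) auto
    show "nablaE Om d nabla0 (n - 1) (nablaE Om d nabla0 n f) = (\<lambda>_. 0)"
      using chain[of f j] f j by simp
  qed
  have B1: "\<forall>n m f w. m \<le> n \<longrightarrow> f \<in> cycles Om d act nabla0 n \<longrightarrow> w \<in> closedf Om d m \<longrightarrow>
        homact Om (n - m) f w \<in> cycles Om d act nabla0 (n - m)
      \<and> (\<forall>f'\<in>hclass Om d act nabla0 n f. \<forall>w'\<in>cclass Om d m w.
           hclass Om d act nabla0 (n - m) (homact Om (n - m) f' w')
         = hclass Om d act nabla0 (n - m) (homact Om (n - m) f w))"
  proof (intro allI impI conjI ballI)
    fix n m f w assume mn: "m \<le> n" and fc: "f \<in> cycles Om d act nabla0 n" and w: "w \<in> closedf Om d m"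
    show "homact Om (n - m) f w \<in> cycles Om d act nabla0 (n - m)"
      by (rule cycles_homact[OF fc w]) (use mn in simp)
    fix f' w' assume "f' \<in> hclass Om d act nabla0 n f" "w' \<in> cclass Om d m w"
    thus "hclass Om d act nabla0 (n - m) (homact Om (n - m) f' w')
         = hclass Om d act nabla0 (n - m) (homact Om (n - m) f w)"
      by (rule b2[OF fc mn])
  qed
  have B2: "\<forall>n f. f \<in> cycles Om d act nabla0 n \<longrightarrow>
        hclass Om d act nabla0 n (homact Om n f 1) = hclass Om d act nabla0 n f"
    using homact_one cyc_HomA by simp
  have B3: "\<forall>n m m' f w w'. m + m' \<le> n \<longrightarrow> f \<in> cycles Om d act nabla0 n \<longrightarrow>
        w \<in> closedf Om d m \<longrightarrow> w' \<in> closedf Om d m' \<longrightarrow>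
        hclass Om d act nabla0 (n - (m + m'))
          (homact Om (n - (m + m')) (homact Om (n - m) f w) w')
      = hclass Om d act nabla0 (n - (m + m')) (homact Om (n - (m + m')) f (w * w'))"
  proof (intro allI impI)
    fix n m m' w w' and f :: "'w \<Rightarrow> 'm" assume le: "m + m' \<le> n" and w': "w' \<in> closedf Om d m'"
    have "w' \<in> Om m'" using w' by (simp add: closedf_def)
    hence "homact Om (n - (m + m')) (homact Om (n - m) f w) w' = homact Om (n - (m + m')) f (w * w')"
      by (rule homact_homact) (use le in simp)
    thus "hclass Om d act nabla0 (n - (m + m'))
          (homact Om (n - (m + m')) (homact Om (n - m) f w) w')
      = hclass Om d act nabla0 (n - (m + m')) (homact Om (n - (m + m')) f (w * w'))" by simp
  qed
  show ?thesis using A1 A2 A3 B1 B2 B3 by blast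
qed

end
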